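(* Let $X$ be a two-parameter Lévy process on $\mathbb{R}^d$ with exponent $\psi$ and let $\alpha(t)=(x(t),y(t))_{t\in T}$ be a decreasing path. Then for any $n\ge1$ and $t_1<\cdots<t_n$ in $T$, the characteristic function $\phi_{t_1,\ldots,t_n}$ of the $\mathbb{R}^{nd}$-valued random variable $(X_{x(t_k),y(t_k)})_{k=1,\ldots,n}$ is given, for $z=(z_k)_{k=1,\ldots,n}$ with $z_k\in\mathbb{R}^d$, by $$\phi_{t_1,\ldots,t_n}(z)=\exp\Bigg[\sum_{i=1}^n\sum_{j=1}^{n-i+1}(x(t_i)-x(t_{i-1}))(y(t_{i+j-1})-y(t_{i+j}))\,\psi\Big(\sum_{k=i}^{i+j-1}z_k\Big)\Bigg],$$ with the convention $x(t_0)=y(t_{n+1})=0$.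
   Context: For $s,t\in\mathbb{R}_+^2$ with $s_1\le t_1$, $s_2\le t_2$, the rectangle $(s,t]$ is $(s_1,t_1]\times(s_2,t_2]$, and the increment of $X$ over it is $X((s,t])=X_{t_1,t_2}-X_{s_1,t_2}-X_{t_1,s_2}+X_{s_1,s_2}$. A two-parameter Lévy process on $\mathbb{R}^d$ is an $\mathbb{R}^d$-valued process $X=\{X_t:t\in\mathbb{R}_+^2\}$ such that: increments over finitely many disjoint rectangles are independent; $X(B)$ and $X(B+p)$ have the same law for every rectangle $B$ and $p\in\mathbb{R}_+^2$; $X$ vanishes on the axes a.s.; $X$ is continuous in probability; and its sample paths are a.s. right continuous with quadrantal limits. Its exponent is the unique Lévy–Khintchine exponent $\psi$ with $E[e^{i\langle z,X(B)\rangle}]=e^{m(B)\psi(z)}$ for every rectangle $B$, $m$ Lebesgue measure. $T\subseteq\mathbb{R}$ is an interval with interior $T^\circ$. A decreasing path is $\alpha(t)=(x(t),y(t))_{t\in T}$ with $x$ nondecreasing and $y$ nonincreasing continuous functions on $T$, both strictly positive on $T^\circ$, at least one not identically constant. *)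

theory Defs
  imports "HOL-Probability.Probability"
begin

definition quadrant :: "(real \<times> real) set" where
  "quadrant = {p. 0 \<le> fst p \<and> 0 \<le> snd p}"

definition is_rect :: "real \<times> real \<Rightarrow> real \<times> real \<Rightarrow> bool" where
  "is_rect s t \<longleftrightarrow> s \<in> quadrant \<and> t \<in> quadrant \<and> fst s \<le> fst t \<and> snd s \<le> snd t"

definition rect :: "real \<times> real \<Rightarrow> real \<times> real \<Rightarrow> (real \<times> real) set" where
  "rect s t = {fst s<..fst t} \<times> {snd s<..snd t}"

definition rect_incr :: "(real \<times> real \<Rightarrow> 'a \<Rightarrow> 'v::real_vector) \<Rightarrow> real \<times> real \<Rightarrow> real \<times> real \<Rightarrow> 'a \<Rightarrow> 'v" where
  "rect_incr X s t \<omega> = X (fst t, snd t) \<omega> - X (fst s, snd t) \<omega> - X (fst t, snd s) \<omega> + X (fst s, snd s) \<omega>"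

text \<open>The four (closed/open) quadrants at t used for quadrantal limits; a = True means s1 >= t1,
  a = False means s1 < t1, likewise b for the second coordinate.\<close>
definition quadrant_at :: "bool \<Rightarrow> bool \<Rightarrow> real \<times> real \<Rightarrow> (real \<times> real) set" where
  "quadrant_at a b t = {s \<in> quadrant.
      (if a then fst t \<le> fst s else fst s < fst t) \<and> (if b then snd t \<le> snd s else snd s < snd t)}"

definition two_param_levy :: "'a measure \<Rightarrow> (real \<times> real \<Rightarrow> 'a \<Rightarrow> 'v::euclidean_space) \<Rightarrow> bool" where
  "two_param_levy M X \<longleftrightarrow>
     prob_space M \<and>
     (\<forall>t\<in>quadrant. X t \<in> borel_measurable M) \<and>
     \<comment> \<open>independent increments over finitely many disjoint rectangles\<close>
     (\<forall>(I::nat set) s t. finite I \<and> (\<forall>i\<in>I. is_rect (s i) (t i)) \<and>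
         disjoint_family_on (\<lambda>i. rect (s i) (t i)) I \<longrightarrow>
         prob_space.indep_vars M (\<lambda>_. borel) (\<lambda>i. rect_incr X (s i) (t i)) I) \<and>
     \<comment> \<open>stationary increments\<close>
     (\<forall>s t p. is_rect s t \<and> p \<in> quadrant \<longrightarrow>
         distr M borel (rect_incr X s t) =
         distr M borel (rect_incr X (fst s + fst p, snd s + snd p) (fst t + fst p, snd t + snd p))) \<and>
     \<comment> \<open>vanishes on the axes a.s.\<close>
     (AE \<omega> in M. \<forall>t\<in>quadrant. (fst t = 0 \<or> snd t = 0) \<longrightarrow> X t \<omega> = 0) \<and>
     \<comment> \<open>continuity in probability\<close>
     (\<forall>t\<in>quadrant. \<forall>e>0.
         ((\<lambda>s. measure M {\<omega> \<in> space M. e < dist (X s \<omega>) (X t \<omega>)}) \<longlongrightarrow> 0) (at t within quadrant)) \<and>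
     \<comment> \<open>right continuous sample paths with quadrantal limits, a.s.\<close>
     (AE \<omega> in M. \<forall>t\<in>quadrant.
         ((\<lambda>s. X s \<omega>) \<longlongrightarrow> X t \<omega>) (at t within quadrant_at True True t) \<and>
         (\<forall>a b. \<exists>l. ((\<lambda>s. X s \<omega>) \<longlongrightarrow> l) (at t within quadrant_at a b t)))"

definition lk_exponent :: "('v::euclidean_space \<Rightarrow> complex) \<Rightarrow> bool" where
  "lk_exponent \<psi> \<longleftrightarrow> (\<exists>(a::'v) (Q::'v \<Rightarrow> 'v) (\<nu>::'v measure).
      linear Q \<and> (\<forall>u v. Q u \<bullet> v = u \<bullet> Q v) \<and> (\<forall>u. 0 \<le> Q u \<bullet> u) \<and>
      sets \<nu> = sets borel \<and> emeasure \<nu> {0} = 0 \<and>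
      integrable \<nu> (\<lambda>x. min 1 ((norm x)\<^sup>2)) \<and>
      (\<forall>z. \<psi> z = \<i> * complex_of_real (a \<bullet> z) - complex_of_real (Q z \<bullet> z / 2)
          + (\<integral>x. (cis (z \<bullet> x) - 1 - \<i> * complex_of_real ((z \<bullet> x) * indicator (cball 0 1) x)) \<partial>\<nu>)))"

definition levy_exponent :: "'a measure \<Rightarrow> (real \<times> real \<Rightarrow> 'a \<Rightarrow> 'v::euclidean_space) \<Rightarrow> ('v \<Rightarrow> complex) \<Rightarrow> bool" where
  "levy_exponent M X \<psi> \<longleftrightarrow> lk_exponent \<psi> \<and>
     (\<forall>s t z. is_rect s t \<longrightarrow>
        prob_space.expectation M (\<lambda>\<omega>. cis (z \<bullet> rect_incr X s t \<omega>)) =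
        exp (complex_of_real (measure lborel (rect s t)) * \<psi> z))"

definition decreasing_path :: "real set \<Rightarrow> (real \<Rightarrow> real) \<Rightarrow> (real \<Rightarrow> real) \<Rightarrow> bool" where
  "decreasing_path T x y \<longleftrightarrow> is_interval T \<and>
     continuous_on T x \<and> continuous_on T y \<and>
     monotone_on T (\<le>) (\<le>) x \<and> monotone_on T (\<le>) (\<ge>) y \<and>
     (\<forall>t\<in>interior T. 0 < x t \<and> 0 < y t) \<and>
     (\<not> (\<exists>c. \<forall>t\<in>T. x t = c) \<or> \<not> (\<exists>c. \<forall>t\<in>T. y t = c))"

definition path_x :: "(real \<Rightarrow> real) \<Rightarrow> (nat \<Rightarrow> real) \<Rightarrow> nat \<Rightarrow> real" where
  "path_x x tt i = (if i = 0 then 0 else x (tt i))"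

definition path_y :: "(real \<Rightarrow> real) \<Rightarrow> (nat \<Rightarrow> real) \<Rightarrow> nat \<Rightarrow> nat \<Rightarrow> real" where
  "path_y y tt n i = (if i = n + 1 then 0 else y (tt i))"

end

theory Submission
  imports Defs
begin

lemma nonneg_aux:
  fixes f :: "real \<Rightarrow> real"
  assumes T: "is_interval T" and c: "continuous_on T f" and pos: "\<forall>s\<in>interior T. 0 < f s"
    and t: "t \<in> T" and u: "u \<in> T" and ne: "u \<noteq> t"
  shows "0 \<le> f t"
proof -
  define S where "S = (if t < u then {t<..<u} else {u<..<t})"
  have iv: "\<And>a b v. a \<in> T \<Longrightarrow> b \<in> T \<Longrightarrow> a \<le> v \<Longrightarrow> v \<le> b \<Longrightarrow> v \<in> T"
    using T unfolding is_interval_1 by blast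
  have ST: "S \<subseteq> T"
  proof
    fix v assume "v \<in> S"
    thus "v \<in> T" using iv[OF t u, of v] iv[OF u t, of v] unfolding S_def
      by (cases "t < u") auto
  qed
  have "open S" unfolding S_def by auto
  hence SI: "S \<subseteq> interior T" using ST interior_maximal by blast
  have lim: "(f \<longlongrightarrow> f t) (at t within T)" using c t by (simp add: continuous_on_def)
  hence lim2: "(f \<longlongrightarrow> f t) (at t within S)" using ST tendsto_within_subset by blast
  have nb: "at t within S \<noteq> bot"
  proof (cases "t < u")
    case True
    hence "t \<in> closure S" unfolding S_def by simp
    thus ?thesis using True unfolding S_def by (simp add: trivial_limit_within islimpt_in_closure)
  next
    case False
    hence "u < t" using ne by simp
    hence "t \<in> closure S" unfolding S_def by simp
    thus ?thesis using False unfolding S_def by (simp add: trivial_limit_within islimpt_in_closure)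
  qed
  have ev: "eventually (\<lambda>s. 0 \<le> f s) (at t within S)"
    unfolding eventually_at_filter
    by (rule always_eventually) (use SI pos in \<open>fastforce\<close>)
  show ?thesis using tendsto_lowerbound[OF lim2 ev nb] .
qed

lemma path_nonneg:
  assumes "decreasing_path T x y" "t \<in> T"
  shows "0 \<le> x t \<and> 0 \<le> y t"
proof -
  have "\<exists>u\<in>T. u \<noteq> t"
  proof (rule ccontr)
    assume "\<not> ?thesis"
    hence "\<forall>s\<in>T. s = t" by blast
    hence "\<forall>s\<in>T. x s = x t" "\<forall>s\<in>T. y s = y t" by simp_all
    moreover have "(\<nexists>c. \<forall>t\<in>T. x t = c) \<or> (\<nexists>c. \<forall>t\<in>T. y t = c)"
      using assms(1) unfolding decreasing_path_def by (elim conjE) assumption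
    ultimately show False by metis
  qed
  then obtain u where u: "u \<in> T" "u \<noteq> t" by blast
  have d: "is_interval T" "continuous_on T x" "continuous_on T y"
    "\<forall>s\<in>interior T. 0 < x s" "\<forall>s\<in>interior T. 0 < y s"
    using assms(1) unfolding decreasing_path_def by (elim conjE; simp)+
  show ?thesis using nonneg_aux[OF d(1,2,4) assms(2) u] nonneg_aux[OF d(1,3,5) assms(2) u] by simp
qed

lemma area:
  assumes "a \<le> b" "c \<le> d"
  shows "measure lborel ({a<..b} \<times> {c<..d}) = (b - a) * (d - c)"
proof -
  have "emeasure (lborel \<Otimes>\<^sub>M lborel) ({a<..b} \<times> {c<..d}) = emeasure lborel {a<..b} * emeasure lborel {c<..d}"
    by (rule lborel.emeasure_pair_measure_Times) auto
  hence "emeasure lborel ({a<..b} \<times> {c<..d}) = ennreal (b-a) * ennreal (d-c)"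
    using assms by (simp add: lborel_prod)
  thus ?thesis using assms by (simp add: measure_def ennreal_mult'[symmetric] enn2real_mult)
qed

lemma monoA:
  fixes A :: "nat \<Rightarrow> real"
  assumes "\<forall>i\<in>{1..n}. A (i-1) \<le> A i" "i \<le> j" "j \<le> n"
  shows "A i \<le> A j"
  using assms(2,3)
proof (induction j)
  case 0 thus ?case by simp
next
  case (Suc j)
  show ?case
  proof (cases "i = Suc j")
    case False
    hence "A i \<le> A j" using Suc by simp
    also have "A j \<le> A (Suc j)" using assms(1) Suc.prems by force
    finally show ?thesis .
  qed simp
qed

lemma monoB:
  fixes B :: "nat \<Rightarrow> real"
  assumes "\<forall>l\<in>{1..n}. B (Suc l) \<le> B l" "1 \<le> i" "i \<le> j" "j \<le> n + 1"
  shows "B j \<le> B i"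
  using assms(3,4)
proof (induction j)
  case 0 thus ?case by simp
next
  case (Suc j)
  show ?case
  proof (cases "i = Suc j")
    case False
    hence "B j \<le> B i" using Suc by simp
    moreover have "B (Suc j) \<le> B j" using assms(1,2) Suc.prems False by force
    ultimately show ?thesis by linarith
  qed simp
qed

lemma tele1:
  fixes f :: "nat \<Rightarrow> 'v::ab_group_add"
  shows "(\<Sum>i=1..k. f i - f (i - 1)) = f k - f 0"
  by (induction k) (auto simp: sum.cl_ivl_Suc)

lemma tele2:
  fixes g :: "nat \<Rightarrow> 'v::ab_group_add"
  assumes "k \<le> Suc n"
  shows "(\<Sum>l=k..n. g l - g (Suc l)) = g k - g (Suc n)"
proof -
  have "(\<Sum>l=k..n. g l - g (Suc l)) = - (\<Sum>l=k..n. g (Suc l) - g l)"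
    by (simp add: sum_negf[symmetric])
  also have "\<dots> = g k - g (Suc n)" using sum_Suc_diff[OF assms, of g] by simp
  finally show ?thesis .
qed

lemma tele:
  fixes G :: "nat \<Rightarrow> nat \<Rightarrow> 'v::ab_group_add"
  assumes "\<forall>l\<in>{1..n+1}. G 0 l = 0" "\<forall>i\<in>{0..n}. G i (n+1) = 0" "1 \<le> k" "k \<le> n"
  shows "G k k = (\<Sum>i=1..k. \<Sum>l=k..n. G i l - G (i-1) l - G i (Suc l) + G (i-1) (Suc l))"
proof -
  have "(\<Sum>i=1..k. \<Sum>l=k..n. G i l - G (i-1) l - G i (Suc l) + G (i-1) (Suc l))
     = (\<Sum>l=k..n. \<Sum>i=1..k. (G i l - G i (Suc l)) - (G (i-1) l - G (i-1) (Suc l)))"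
    by (subst sum.swap) (simp add: algebra_simps)
  also have "\<dots> = (\<Sum>l=k..n. G k l - G k (Suc l))"
    apply (rule sum.cong[OF refl])
    apply (subst tele1[where f="\<lambda>i. G i _ - G i (Suc _)"])
    using assms by auto
  also have "\<dots> = G k k - G k (Suc n)" using assms by (intro tele2) auto
  finally show ?thesis using assms by simp
qed



lemma sum_ext_upper:
  fixes f :: "nat \<Rightarrow> 'b::comm_monoid_add"
  assumes "b \<le> c"
  shows "(\<Sum>i=a..b. f i) = (\<Sum>i=a..c. if i \<le> b then f i else 0)"
proof -
  have "{a..b} = {i\<in>{a..c}. i \<le> b}" using assms by auto
  thus ?thesis by (simp only:) (rule sum.inter_filter, simp)
qed

lemma sum_ext_lower:
  fixes f :: "nat \<Rightarrow> 'b::comm_monoid_add"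
  assumes "a \<le> b"
  shows "(\<Sum>i=b..c. f i) = (\<Sum>i=a..c. if b \<le> i then f i else 0)"
proof -
  have "{b..c} = {i\<in>{a..c}. b \<le> i}" using assms by auto
  thus ?thesis by (simp only:) (rule sum.inter_filter, simp)
qed

lemma rearrange:
  fixes z :: "nat \<Rightarrow> 'v::real_inner" and D :: "nat \<Rightarrow> nat \<Rightarrow> 'v"
  shows "(\<Sum>k=1..n. z k \<bullet> (\<Sum>i=1..k. \<Sum>l=k..n. D i l)) = (\<Sum>i=1..n. \<Sum>l=i..n. (\<Sum>k=i..l. z k) \<bullet> D i l)"
proof -
  define g where "g k i l = (if i \<le> k \<and> k \<le> l then z k \<bullet> D i l else 0)" for k i l
  have L: "(\<Sum>k=1..n. z k \<bullet> (\<Sum>i=1..k. \<Sum>l=k..n. D i l)) = (\<Sum>k=1..n. \<Sum>i=1..n. \<Sum>l=1..n. g k i l)"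
  proof (rule sum.cong[OF refl])
    fix k assume k: "k \<in> {1..n}"
    have "z k \<bullet> (\<Sum>i=1..k. \<Sum>l=k..n. D i l) = (\<Sum>i=1..k. \<Sum>l=k..n. z k \<bullet> D i l)"
      by (simp add: inner_sum_right)
    also have "\<dots> = (\<Sum>i=1..n. if i \<le> k then (\<Sum>l=k..n. z k \<bullet> D i l) else 0)"
      using k by (intro sum_ext_upper) auto
    also have "\<dots> = (\<Sum>i=1..n. \<Sum>l=1..n. g k i l)"
    proof (rule sum.cong[OF refl])
      fix i assume i: "i \<in> {1..n}"
      have "(\<Sum>l=k..n. z k \<bullet> D i l) = (\<Sum>l=1..n. if k \<le> l then z k \<bullet> D i l else 0)"
        using k by (intro sum_ext_lower) auto
      thus "(if i \<le> k then (\<Sum>l=k..n. z k \<bullet> D i l) else 0) = (\<Sum>l=1..n. g k i l)"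
        by (simp add: g_def)
    qed
    finally show "z k \<bullet> (\<Sum>i=1..k. \<Sum>l=k..n. D i l) = (\<Sum>i=1..n. \<Sum>l=1..n. g k i l)" .
  qed
  have R: "(\<Sum>i=1..n. \<Sum>l=i..n. (\<Sum>k=i..l. z k) \<bullet> D i l) = (\<Sum>i=1..n. \<Sum>l=1..n. \<Sum>k=1..n. g k i l)"
  proof (rule sum.cong[OF refl])
    fix i assume i: "i \<in> {1..n}"
    have "(\<Sum>l=i..n. (\<Sum>k=i..l. z k) \<bullet> D i l) = (\<Sum>l=1..n. if i \<le> l then (\<Sum>k=i..l. z k) \<bullet> D i l else 0)"
      using i by (intro sum_ext_lower) auto
    also have "\<dots> = (\<Sum>l=1..n. \<Sum>k=1..n. g k i l)"
    proof (rule sum.cong[OF refl])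
      fix l assume l: "l \<in> {1..n}"
      have "(\<Sum>k=i..l. z k) \<bullet> D i l = (\<Sum>k=i..l. z k \<bullet> D i l)" by (simp add: inner_sum_left)
      also have "\<dots> = (\<Sum>k=i..n. if k \<le> l then z k \<bullet> D i l else 0)"
        using l by (intro sum_ext_upper) auto
      also have "\<dots> = (\<Sum>k=1..n. if i \<le> k then (if k \<le> l then z k \<bullet> D i l else 0) else 0)"
        using i by (intro sum_ext_lower) auto
      finally show "(if i \<le> l then (\<Sum>k=i..l. z k) \<bullet> D i l else 0) = (\<Sum>k=1..n. g k i l)"
        by (auto simp: g_def if_if_eq_conj intro!: sum.neutral)
    qed
    finally show "(\<Sum>l=i..n. (\<Sum>k=i..l. z k) \<bullet> D i l) = (\<Sum>l=1..n. \<Sum>k=1..n. g k i l)" .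
  qed
  have "(\<Sum>k=1..n. \<Sum>i=1..n. \<Sum>l=1..n. g k i l) = (\<Sum>i=1..n. \<Sum>k=1..n. \<Sum>l=1..n. g k i l)"
    by (rule sum.swap)
  also have "\<dots> = (\<Sum>i=1..n. \<Sum>l=1..n. \<Sum>k=1..n. g k i l)"
    by (rule sum.cong[OF refl], rule sum.swap)
  finally show ?thesis using L R by simp
qed

lemma cis_sum: "finite S \<Longrightarrow> cis (\<Sum>x\<in>S. f x) = (\<Prod>x\<in>S. cis (f x))"
  by (induction S rule: finite_induct) (auto simp: cis_mult[symmetric])

lemma cis_meas: "f \<in> borel_measurable M \<Longrightarrow> (\<lambda>\<omega>. cis (f \<omega>)) \<in> borel_measurable M"
  by (rule measurable_compose[where f=f], assumption, rule borel_measurable_continuous_onI)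
     (intro continuous_intros)



lemma main:
  fixes M :: "'a measure" and X :: "real \<times> real \<Rightarrow> 'a \<Rightarrow> 'v::euclidean_space"
    and \<psi> :: "'v \<Rightarrow> complex" and A B :: "nat \<Rightarrow> real" and z :: "nat \<Rightarrow> 'v"
  assumes lv: "two_param_levy M X" and ex: "levy_exponent M X \<psi>"
    and A0: "A 0 = 0" and Am: "\<forall>i\<in>{1..n}. A (i-1) \<le> A i"
    and B0: "B (n+1) = 0" and Bm: "\<forall>l\<in>{1..n}. B (Suc l) \<le> B l"
  shows "(\<integral>\<omega>. cis (\<Sum>k=1..n. z k \<bullet> X (A k, B k) \<omega>) \<partial>M) =
    exp (\<Sum>i=1..n. \<Sum>l=i..n. complex_of_real ((A i - A (i-1)) * (B l - B (Suc l))) * \<psi> (\<Sum>k=i..l. z k))"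
proof -
  interpret prob_space M using lv unfolding two_param_levy_def by blast
  have Anon: "\<And>i. i \<le> n \<Longrightarrow> 0 \<le> A i" using monoA[OF Am, of 0] A0 by force
  have Bnon: "\<And>l. 1 \<le> l \<Longrightarrow> l \<le> n+1 \<Longrightarrow> 0 \<le> B l" using monoB[OF Bm, of _ "n+1"] B0 by force
  define P where "P = Sigma {1..n} (\<lambda>i. {i..n})"
  have finP: "finite P" unfolding P_def by simp
  define D where "D i l \<omega> = rect_incr X (A (i-1), B (Suc l)) (A i, B l) \<omega>" for i l \<omega>
  define W where "W i l = (\<Sum>k=i..l. z k)" for i l
  have meas: "\<And>t. t \<in> quadrant \<Longrightarrow> X t \<in> borel_measurable M"
    using lv unfolding two_param_levy_def by blast
  have quad: "\<And>i l. i \<le> n \<Longrightarrow> 1 \<le> l \<Longrightarrow> l \<le> n+1 \<Longrightarrow> (A i, B l) \<in> quadrant"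
    using Anon Bnon by (auto simp: quadrant_def)
  have Dmeas: "D i l \<in> borel_measurable M" if "(i,l) \<in> P" for i l
  proof -
    have "i \<le> n" "1 \<le> l" "l \<le> n" "1 \<le> i" using that unfolding P_def by auto
    hence m: "X (A i, B l) \<in> borel_measurable M" "X (A (i-1), B l) \<in> borel_measurable M"
      "X (A i, B (Suc l)) \<in> borel_measurable M" "X (A (i-1), B (Suc l)) \<in> borel_measurable M"
      by (auto intro!: meas quad)
    show ?thesis unfolding D_def rect_incr_def fst_conv snd_conv using m by measurable
  qed
  have rect: "is_rect (A (i-1), B (Suc l)) (A i, B l)" if "(i,l) \<in> P" for i l
  proof -
    have "i \<le> n" "1 \<le> l" "l \<le> n" "1 \<le> i" using that unfolding P_def by auto
    thus ?thesis unfolding is_rect_def using quad Am Bm by auto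
  qed
  have vanish: "AE \<omega> in M. \<forall>t\<in>quadrant. (fst t = 0 \<or> snd t = 0) \<longrightarrow> X t \<omega> = 0"
    using lv unfolding two_param_levy_def by blast
  have AEeq: "AE \<omega> in M. (\<Sum>k=1..n. z k \<bullet> X (A k, B k) \<omega>) = (\<Sum>(i,l)\<in>P. W i l \<bullet> D i l \<omega>)"
    using vanish
  proof eventually_elim
    case (elim \<omega>)
    define G where "G i l = X (A i, B l) \<omega>" for i l
    have G0: "\<forall>l\<in>{1..n+1}. G 0 l = 0"
      using elim quad[of 0] A0 unfolding G_def by auto
    have Gn: "\<forall>i\<in>{0..n}. G i (n+1) = 0"
      using elim quad[of _ "n+1"] B0 unfolding G_def by auto
    have "(\<Sum>k=1..n. z k \<bullet> X (A k, B k) \<omega>) = (\<Sum>k=1..n. z k \<bullet> (\<Sum>i=1..k. \<Sum>l=k..n. D i l \<omega>))"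
    proof (rule sum.cong[OF refl])
      fix k assume k: "k \<in> {1..n}"
      have "X (A k, B k) \<omega> = G k k" unfolding G_def ..
      also have "\<dots> = (\<Sum>i=1..k. \<Sum>l=k..n. G i l - G (i-1) l - G i (Suc l) + G (i-1) (Suc l))"
        using k by (intro tele G0 Gn) auto
      also have "\<dots> = (\<Sum>i=1..k. \<Sum>l=k..n. D i l \<omega>)"
        unfolding D_def rect_incr_def G_def by simp
      finally show "z k \<bullet> X (A k, B k) \<omega> = z k \<bullet> (\<Sum>i=1..k. \<Sum>l=k..n. D i l \<omega>)" by simp
    qed
    also have "\<dots> = (\<Sum>i=1..n. \<Sum>l=i..n. W i l \<bullet> D i l \<omega>)"
      unfolding W_def by (rule rearrange)
    also have "\<dots> = (\<Sum>(i,l)\<in>P. W i l \<bullet> D i l \<omega>)"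
      unfolding P_def by (simp add: sum.Sigma)
    finally show ?case .
  qed
  have Xk: "X (A k, B k) \<in> borel_measurable M" if "k \<in> {1..n}" for k
    using that by (auto intro!: meas quad)
  have LHSm: "(\<lambda>\<omega>. cis (\<Sum>k=1..n. z k \<bullet> X (A k, B k) \<omega>)) \<in> borel_measurable M"
    by (intro cis_meas borel_measurable_sum borel_measurable_inner borel_measurable_const Xk)
  define F where "F p \<omega> = cis (W (fst p) (snd p) \<bullet> D (fst p) (snd p) \<omega>)" for p \<omega>
  have Fm: "F p \<in> borel_measurable M" if "p \<in> P" for p
    unfolding F_def using that
    by (intro cis_meas borel_measurable_inner borel_measurable_const Dmeas) auto
  have Fint: "integrable M (F p)" if "p \<in> P" for p
    by (rule integrable_const_bound[where B=1]) (auto simp: F_def Fm[OF that])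
  have RHSm: "(\<lambda>\<omega>. cis (\<Sum>(i,l)\<in>P. W i l \<bullet> D i l \<omega>)) \<in> borel_measurable M"
    unfolding split_beta
    by (intro cis_meas borel_measurable_sum borel_measurable_inner borel_measurable_const Dmeas) auto
  have step1: "(\<integral>\<omega>. cis (\<Sum>k=1..n. z k \<bullet> X (A k, B k) \<omega>) \<partial>M) = (\<integral>\<omega>. cis (\<Sum>(i,l)\<in>P. W i l \<bullet> D i l \<omega>) \<partial>M)"
    by (rule integral_cong_AE[OF LHSm RHSm]) (use AEeq in \<open>eventually_elim, simp\<close>)
  have step2: "(\<lambda>\<omega>. cis (\<Sum>(i,l)\<in>P. W i l \<bullet> D i l \<omega>)) = (\<lambda>\<omega>. \<Prod>p\<in>P. F p \<omega>)"
    unfolding F_def split_beta by (rule ext, rule cis_sum[OF finP])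
  define I where "I = prod_encode ` P"
  have finI: "finite I" unfolding I_def using finP by simp
  have injP: "inj_on prod_encode P" by (meson inj_on_def prod_encode_eq)
  have reP: "\<And>g :: nat \<times> nat \<Rightarrow> complex. (\<Prod>m\<in>I. g (prod_decode m)) = (\<Prod>p\<in>P. g p)"
    unfolding I_def by (subst prod.reindex[OF injP]) (simp add: prod_encode_inverse)
  define s where "s m = (A (fst (prod_decode m) - 1), B (Suc (snd (prod_decode m))))" for m
  define t where "t m = (A (fst (prod_decode m)), B (snd (prod_decode m)))" for m
  have Dst: "D (fst (prod_decode m)) (snd (prod_decode m)) \<omega> = rect_incr X (s m) (t m) \<omega>" for m \<omega>
    unfolding D_def s_def t_def ..
  have indep_ax: "\<forall>(I::nat set) s t. finite I \<and> (\<forall>i\<in>I. is_rect (s i) (t i)) \<and>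
         disjoint_family_on (\<lambda>i. rect (s i) (t i)) I \<longrightarrow>
         indep_vars (\<lambda>_. borel) (\<lambda>i. rect_incr X (s i) (t i)) I"
    using lv unfolding two_param_levy_def by (elim conjE) assumption
  have disj: "rect (A (i-1), B (Suc l)) (A i, B l) \<inter> rect (A (i'-1), B (Suc l')) (A i', B l') = {}"
    if pp: "(i,l) \<in> P" "(i',l') \<in> P" and ne: "(i,l) \<noteq> (i',l')" for i l i' l'
  proof -
    have r: "1 \<le> i" "i \<le> l" "l \<le> n" "1 \<le> i'" "i' \<le> l'" "l' \<le> n" using pp unfolding P_def by auto
    consider "i < i'" | "i' < i" | "i = i'" "l < l'" | "i = i'" "l' < l" using ne by fastforce
    thus ?thesis
    proof cases
      case 1
      hence "A i \<le> A (i'-1)" using r by (intro monoA[OF Am]) auto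
      thus ?thesis by (auto simp: rect_def)
    next
      case 2
      hence "A i' \<le> A (i-1)" using r by (intro monoA[OF Am]) auto
      thus ?thesis by (auto simp: rect_def)
    next
      case 3
      hence "B l' \<le> B (Suc l)" using r by (intro monoB[OF Bm]) auto
      thus ?thesis by (auto simp: rect_def)
    next
      case 4
      hence "B l \<le> B (Suc l')" using r by (intro monoB[OF Bm]) auto
      thus ?thesis by (auto simp: rect_def)
    qed
  qed
  have indep0: "indep_vars (\<lambda>_. borel) (\<lambda>m. rect_incr X (s m) (t m)) I"
  proof -
    have "\<forall>m\<in>I. is_rect (s m) (t m)"
      unfolding I_def s_def t_def using rect by (auto simp: prod_encode_inverse)
    moreover have "disjoint_family_on (\<lambda>m. rect (s m) (t m)) I"
      unfolding disjoint_family_on_def I_def s_def t_def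
      using disj by (fastforce simp: prod_encode_inverse)
    ultimately show ?thesis using indep_ax finI by blast
  qed
  have indep1: "indep_vars (\<lambda>_. borel) (\<lambda>m \<omega>. F (prod_decode m) \<omega>) I"
  proof -
    have "indep_vars (\<lambda>_. borel) (\<lambda>m \<omega>. (\<lambda>v. cis (W (fst (prod_decode m)) (snd (prod_decode m)) \<bullet> v)) (rect_incr X (s m) (t m) \<omega>)) I"
      by (rule indep_vars_compose2[OF indep0]) (rule cis_meas, measurable)
    thus ?thesis unfolding F_def Dst .
  qed
  have PI: "\<And>m. m \<in> I \<Longrightarrow> prod_decode m \<in> P" unfolding I_def by (auto simp: prod_encode_inverse)
  have step3: "(\<integral>\<omega>. (\<Prod>p\<in>P. F p \<omega>) \<partial>M) = (\<Prod>p\<in>P. \<integral>\<omega>. F p \<omega> \<partial>M)"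
  proof -
    have "(\<integral>\<omega>. (\<Prod>p\<in>P. F p \<omega>) \<partial>M) = (\<integral>\<omega>. (\<Prod>m\<in>I. F (prod_decode m) \<omega>) \<partial>M)"
      using reP[of "\<lambda>p. F p _"] by simp
    also have "\<dots> = (\<Prod>m\<in>I. \<integral>\<omega>. F (prod_decode m) \<omega> \<partial>M)"
      by (rule indep_vars_lebesgue_integral[OF finI indep1]) (auto intro: Fint PI)
    also have "\<dots> = (\<Prod>p\<in>P. \<integral>\<omega>. F p \<omega> \<partial>M)"
      using reP[of "\<lambda>p. \<integral>\<omega>. F p \<omega> \<partial>M"] by simp
    finally show ?thesis .
  qed
  have exax: "\<forall>s t z. is_rect s t \<longrightarrow>
        expectation (\<lambda>\<omega>. cis (z \<bullet> rect_incr X s t \<omega>)) =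
        exp (complex_of_real (measure lborel (rect s t)) * \<psi> z)"
    using ex unfolding levy_exponent_def by (elim conjE) assumption
  have step4: "(\<integral>\<omega>. F p \<omega> \<partial>M) = exp (complex_of_real ((A (fst p) - A (fst p - 1)) * (B (snd p) - B (Suc (snd p)))) * \<psi> (W (fst p) (snd p)))"
    if "p \<in> P" for p
  proof -
    obtain i l where p: "p = (i,l)" by fastforce
    have ri: "is_rect (A (i-1), B (Suc l)) (A i, B l)" using rect that p by simp
    have "(\<integral>\<omega>. F p \<omega> \<partial>M) = exp (complex_of_real (measure lborel (rect (A (i-1), B (Suc l)) (A i, B l))) * \<psi> (W i l))"
      using exax ri unfolding F_def D_def p by simp
    also have "measure lborel (rect (A (i-1), B (Suc l)) (A i, B l)) = (A i - A (i-1)) * (B l - B (Suc l))"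
      using ri unfolding rect_def is_rect_def by (simp add: area)
    finally show ?thesis unfolding p by simp
  qed
  have "(\<integral>\<omega>. cis (\<Sum>k=1..n. z k \<bullet> X (A k, B k) \<omega>) \<partial>M) = (\<Prod>p\<in>P. \<integral>\<omega>. F p \<omega> \<partial>M)"
    using step1 step2 step3 by simp
  also have "\<dots> = (\<Prod>p\<in>P. exp (complex_of_real ((A (fst p) - A (fst p - 1)) * (B (snd p) - B (Suc (snd p)))) * \<psi> (W (fst p) (snd p))))"
    by (rule prod.cong[OF refl]) (rule step4)
  also have "\<dots> = exp (\<Sum>p\<in>P. complex_of_real ((A (fst p) - A (fst p - 1)) * (B (snd p) - B (Suc (snd p)))) * \<psi> (W (fst p) (snd p)))"
    by (rule exp_sum[OF finP, symmetric])
  also have "\<dots> = exp (\<Sum>i=1..n. \<Sum>l=i..n. complex_of_real ((A i - A (i-1)) * (B l - B (Suc l))) * \<psi> (\<Sum>k=i..l. z k))"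
  proof -
    have gen: "(\<Sum>p\<in>P. c (fst p) (snd p)) = (\<Sum>i=1..n. \<Sum>l=i..n. c i l)" for c :: "nat \<Rightarrow> nat \<Rightarrow> complex"
      unfolding P_def by (subst sum.Sigma) (auto simp: split_beta)
    show ?thesis unfolding W_def
      by (rule arg_cong[where f=exp], rule gen[of "\<lambda>i l. complex_of_real ((A i - A (i-1)) * (B l - B (Suc l))) * \<psi> (\<Sum>k=i..l. z k)"])
  qed
  finally show ?thesis .
qed

theorem theorem1:
  fixes M :: "'a measure" and X :: "real \<times> real \<Rightarrow> 'a \<Rightarrow> 'v::euclidean_space"
    and \<psi> :: "'v \<Rightarrow> complex" and T :: "real set" and x y :: "real \<Rightarrow> real"
    and n :: nat and tt :: "nat \<Rightarrow> real" and z :: "nat \<Rightarrow> 'v"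
  assumes "two_param_levy M X"
    and "levy_exponent M X \<psi>"
    and "decreasing_path T x y"
    and "n \<ge> 1"
    and "\<forall>k\<in>{1..n}. tt k \<in> T"
    and "\<forall>k\<in>{1..<n}. tt k < tt (Suc k)"
  shows "prob_space.expectation M
           (\<lambda>\<omega>. cis (\<Sum>k=1..n. z k \<bullet> X (x (tt k), y (tt k)) \<omega>)) =
         exp (\<Sum>i=1..n. \<Sum>j=1..n-i+1.
               complex_of_real ((path_x x tt i - path_x x tt (i - 1)) *
                                (path_y y tt n (i + j - 1) - path_y y tt n (i + j))) *
               \<psi> (\<Sum>k=i..i+j-1. z k))"
proof -
  define A where "A = path_x x tt"
  define B where "B = path_y y tt n"
  have mx: "monotone_on T (\<le>) (\<le>) x"
    using assms(3) unfolding decreasing_path_def by (elim conjE) assumption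
  have my: "monotone_on T (\<le>) (\<ge>) y"
    using assms(3) unfolding decreasing_path_def by (elim conjE) assumption
  have A0: "A 0 = 0" unfolding A_def path_x_def by simp
  have B0: "B (n+1) = 0" unfolding B_def path_y_def by simp
  have Am: "\<forall>i\<in>{1..n}. A (i-1) \<le> A i"
  proof
    fix i assume i: "i \<in> {1..n}"
    show "A (i-1) \<le> A i"
    proof (cases "i = 1")
      case True
      thus ?thesis using path_nonneg[OF assms(3), of "tt 1"] assms(5) i
        unfolding A_def path_x_def by auto
    next
      case False
      hence i2: "i - 1 \<in> {1..<n}" "Suc (i-1) = i" using i by auto
      have "tt (i-1) < tt i" using assms(6) i2 by metis
      moreover have "tt (i-1) \<in> T" "tt i \<in> T" using assms(5) i i2 by auto
      ultimately have "x (tt (i-1)) \<le> x (tt i)" using mx unfolding monotone_on_def by auto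
      thus ?thesis using False i unfolding A_def path_x_def by auto
    qed
  qed
  have Bm: "\<forall>l\<in>{1..n}. B (Suc l) \<le> B l"
  proof
    fix l assume l: "l \<in> {1..n}"
    show "B (Suc l) \<le> B l"
    proof (cases "l = n")
      case True
      thus ?thesis using path_nonneg[OF assms(3), of "tt n"] assms(5) l
        unfolding B_def path_y_def by auto
    next
      case False
      hence l2: "l \<in> {1..<n}" using l by auto
      have "tt l < tt (Suc l)" using assms(6) l2 by blast
      moreover have "tt l \<in> T" "tt (Suc l) \<in> T" using assms(5) l l2 by auto
      ultimately have "y (tt (Suc l)) \<le> y (tt l)" using my unfolding monotone_on_def by auto
      thus ?thesis using False l unfolding B_def path_y_def by auto
    qed
  qed
  have L: "(\<Sum>k=1..n. z k \<bullet> X (x (tt k), y (tt k)) \<omega>) = (\<Sum>k=1..n. z k \<bullet> X (A k, B k) \<omega>)" for \<omega>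
    by (rule sum.cong[OF refl]) (auto simp: A_def B_def path_x_def path_y_def)
  have R: "(\<Sum>j=1..n-i+1. complex_of_real ((path_x x tt i - path_x x tt (i - 1)) *
                                (path_y y tt n (i + j - 1) - path_y y tt n (i + j))) *
               \<psi> (\<Sum>k=i..i+j-1. z k))
        = (\<Sum>l=i..n. complex_of_real ((A i - A (i-1)) * (B l - B (Suc l))) * \<psi> (\<Sum>k=i..l. z k))"
    if i: "i \<in> {1..n}" for i
  proof -
    define g where "g l = complex_of_real ((A i - A (i-1)) * (B l - B (Suc l))) * \<psi> (\<Sum>k=i..l. z k)" for l
    have "(\<Sum>l=i..n. g l) = (\<Sum>l=1+(i-1)..(n-i+1)+(i-1). g l)" using i by (simp add: add.commute)
    also have "\<dots> = (\<Sum>j=1..n-i+1. g (j + (i-1)))" by (rule sum.shift_bounds_cl_nat_ivl)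
    also have "\<dots> = (\<Sum>j=1..n-i+1. complex_of_real ((path_x x tt i - path_x x tt (i - 1)) *
                                (path_y y tt n (i + j - 1) - path_y y tt n (i + j))) *
               \<psi> (\<Sum>k=i..i+j-1. z k))"
    proof (rule sum.cong[OF refl])
      fix j assume j: "j \<in> {1..n-i+1}"
      have e: "j + (i-1) = i + j - 1" "Suc (i + j - 1) = i + j" using i j by auto
      show "g (j + (i-1)) = complex_of_real ((path_x x tt i - path_x x tt (i - 1)) *
                                (path_y y tt n (i + j - 1) - path_y y tt n (i + j))) *
               \<psi> (\<Sum>k=i..i+j-1. z k)"
        unfolding g_def e A_def B_def by simp
    qed
    finally show ?thesis unfolding g_def by simp
  qed
  have "prob_space.expectation M (\<lambda>\<omega>. cis (\<Sum>k=1..n. z k \<bullet> X (x (tt k), y (tt k)) \<omega>))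
      = (\<integral>\<omega>. cis (\<Sum>k=1..n. z k \<bullet> X (A k, B k) \<omega>) \<partial>M)" unfolding L ..
  also have "\<dots> = exp (\<Sum>i=1..n. \<Sum>l=i..n. complex_of_real ((A i - A (i-1)) * (B l - B (Suc l))) * \<psi> (\<Sum>k=i..l. z k))"
    by (rule main[OF assms(1,2) A0 Am B0 Bm])
  also have "\<dots> = exp (\<Sum>i=1..n. \<Sum>j=1..n-i+1.
               complex_of_real ((path_x x tt i - path_x x tt (i - 1)) *
                                (path_y y tt n (i + j - 1) - path_y y tt n (i + j))) *
               \<psi> (\<Sum>k=i..i+j-1. z k))"
    by (rule arg_cong[where f=exp], rule sum.cong[OF refl], rule R[symmetric])
  finally show ?thesis .
qed

end
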